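(* Let $t>0$ and suppose $f$ is continuous at $X(t)$. Then \[\lim_{N\to\infty}\left|f^N(NX_N(t))/N^\alpha-f(X(t))\right|=0\quad\text{a.s.}\]
   Context: Fix integers $n,m\ge1$, vectors $\nu_1,\dots,\nu_m\in\mathbb{Z}^n$ and $c=(c_1,\dots,c_m)$ with all $c_j>0$; $|\cdot|$ is a fixed norm. For each $N\ge1$ and $j$, $a_j^N(x)=c_jb_j^N(x)$ with $b_j^N:\mathbb{R}^n\to\mathbb{R}$ nonnegative on $\mathbb{Z}_+^n$. Standing assumptions: (i) for each $j$ and $x\in\mathbb{R}_+^n$ the limit $a_j(x)=\lim_Na_j^N(Nx)/N$ exists, and for each compact $K\subset\mathbb{R}_+^n$ there is $B_K>0$ with $|a_j^N(Nx)/N-a_j(x)|\le B_K/N$ for $x\in K$, $N\ge1$, all $j$; (ii) each $a_j$ is continuously differentiable on $\mathbb{R}^n$; (iii) $x_0\in\mathbb{R}_+^n$ is fixed, $N$ ranges over positive integers with $Nx_0\in\mathbb{Z}_+^n$, and on a probability space with independent unit-rate Poisson processes $Y_1,\dots,Y_m$, $X^N$ solves $X^N(t)=Nx_0+\sum_jY_j\big(\int_0^ta_j^N(X^N(s))ds\big)\nu_j$; (iv) with $X_N(t)=X^N(t)/N$, there is $\Gamma$ with $|X_N(t)|\le\Gamma$ a.s. for all $t\ge0$, $N$; (v) $f^N,f:\mathbb{R}^n\to\mathbb{R}$ and $\alpha>0$ satisfy: for each compact $K\subset\mathbb{R}_+^n$ there is $L_K$ with $|f^N(Nx)/N^\alpha-f(x)|\le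 L_K/\sqrt N$ for $x\in K$, $N\ge1$. $X$ is the solution of $X(t)=x_0+\sum_j\nu_j\int_0^ta_j(X(s))ds$, $t\ge0$. *)

theory Defs
  imports "HOL-Probability.Probability"
begin

definition Rplus :: "(real ^ 'n) set" where
  "Rplus = {x. \<forall>i. 0 \<le> x $ i}"

definition Zplus :: "(real ^ 'n) set" where
  "Zplus = {x. \<forall>i. x $ i \<in> \<nat>}"

definition Zvec :: "(real ^ 'n) set" where
  "Zvec = {x. \<forall>i. x $ i \<in> \<int>}"

definition indep_unit_poisson :: "'a measure \<Rightarrow> nat \<Rightarrow> (nat \<Rightarrow> 'a \<Rightarrow> real \<Rightarrow> real) \<Rightarrow> bool" where
  "indep_unit_poisson M m Y \<longleftrightarrow>
     prob_space M \<and>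
     (\<forall>j<m. \<forall>\<omega>\<in>space M.
        Y j \<omega> 0 = 0 \<and> (\<forall>t\<ge>0. Y j \<omega> t \<in> \<nat>) \<and> mono_on {0..} (Y j \<omega>) \<and>
        (\<forall>t\<ge>0. continuous (at_right t) (Y j \<omega>))) \<and>
     (\<forall>j<m. \<forall>t\<ge>0. (\<lambda>\<omega>. Y j \<omega> t) \<in> borel_measurable M) \<and>
     (\<forall>j<m. \<forall>s t. 0 \<le> s \<longrightarrow> s \<le> t \<longrightarrow> (\<forall>k::nat.
        measure M {\<omega>\<in>space M. Y j \<omega> t - Y j \<omega> s = real k}
          = exp (-(t - s)) * (t - s) ^ k / fact k)) \<and>
     (\<forall>(ts :: nat \<Rightarrow> real) K. (\<forall>i. 0 \<le> ts i) \<longrightarrow> mono ts \<longrightarrow>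
        prob_space.indep_vars M (\<lambda>_. borel)
          (\<lambda>(j, i) \<omega>. Y j \<omega> (ts (Suc i)) - Y j \<omega> (ts i)) ({..<m} \<times> {..<K}))"

end

theory Submission
  imports Defs
begin


lemma pois_weighted_bound:
  fixes Z :: "'a \<Rightarrow> real" and S :: "real set" and w :: "nat \<Rightarrow> real"
  assumes P: "prob_space M"
    and Zn: "\<forall>\<omega>\<in>space M. Z \<omega> \<in> \<nat>"
    and Zm: "Z \<in> borel_measurable M"
    and pk: "\<forall>k::nat. measure M {\<omega>\<in>space M. Z \<omega> = real k} = p k"
    and w1: "\<And>k. real k \<in> S \<Longrightarrow> 1 \<le> w k"
    and w0: "\<And>k. 0 \<le> w k"
    and sm: "(\<lambda>k. p k * w k) sums s"
  shows "measure M {\<omega>\<in>space M. Z \<omega> \<in> S} \<le> s"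
proof -
  interpret prob_space M by fact
  define E where "E k = {\<omega>\<in>space M. Z \<omega> = real k \<and> real k \<in> S}" for k :: nat
  have Ems: "E k \<in> sets M" for k
  proof -
    have "E k = (if real k \<in> S then {\<omega>\<in>space M. Z \<omega> = real k} else {})" by (auto simp: E_def)
    then show ?thesis using Zm by simp
  qed
  have disj: "disjoint_family E" by (auto simp: disjoint_family_on_def E_def)
  have U: "(\<Union>k. E k) = {\<omega>\<in>space M. Z \<omega> \<in> S}"
  proof safe
    fix \<omega> assume "\<omega> \<in> space M" "Z \<omega> \<in> S"
    then obtain k where "Z \<omega> = real k" using Zn by (metis Nats_cases)
    then show "\<omega> \<in> (\<Union>k. E k)" using \<open>\<omega> \<in> space M\<close> \<open>Z \<omega> \<in> S\<close> by (auto simp: E_def)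
  qed (auto simp: E_def)
  have su: "(\<lambda>k. measure M (E k)) sums measure M {\<omega>\<in>space M. Z \<omega> \<in> S}"
    using finite_measure_UNION[of E] Ems disj U by auto
  have le: "measure M (E k) \<le> p k * w k" for k
  proof (cases "real k \<in> S")
    case True
    then have "E k = {\<omega>\<in>space M. Z \<omega> = real k}" by (auto simp: E_def)
    then have "measure M (E k) = p k" using pk by simp
    moreover have "p k \<ge> 0" using pk measure_nonneg by metis
    ultimately show ?thesis using w1[OF True] by (simp add: mult_le_cancel_left1)
  next
    case False
    then have "E k = {}" by (auto simp: E_def)
    moreover have "p k \<ge> 0" using pk measure_nonneg by metis
    ultimately show ?thesis using w0[of k] by simp
  qed
  show ?thesis using sums_le[OF le su sm] .
qed

lemma exp_series_sums: "(\<lambda>k. exp (-\<mu>) * \<mu> ^ k / fact k * exp (\<theta> * (real k - A))) sums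
   (exp (-\<theta>*A) * exp (\<mu> * (exp \<theta> - 1)))"
proof -
  have "(\<lambda>k. (\<mu> * exp \<theta>) ^ k / fact k) sums exp (\<mu> * exp \<theta>)"
    using exp_converges[of "\<mu> * exp \<theta>"] by (simp add: divide_inverse mult.commute)
  then have "(\<lambda>k. (exp (-\<mu>) * exp (-\<theta>*A)) * ((\<mu> * exp \<theta>) ^ k / fact k)) sums
     ((exp (-\<mu>) * exp (-\<theta>*A)) * exp (\<mu> * exp \<theta>))" by (rule sums_mult)
  moreover have "(\<lambda>k. (exp (-\<mu>) * exp (-\<theta>*A)) * ((\<mu> * exp \<theta>) ^ k / fact k)) =
     (\<lambda>k. exp (-\<mu>) * \<mu> ^ k / fact k * exp (\<theta> * (real k - A)))"
    apply (rule ext)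
    by (simp add: power_mult_distrib exp_of_nat_mult[symmetric] exp_diff right_diff_distrib mult.commute exp_minus field_simps)
  moreover have "(exp (-\<mu>) * exp (-\<theta>*A)) * exp (\<mu> * exp \<theta>) = exp (-\<theta>*A) * exp (\<mu> * (exp \<theta> - 1))"
    by (simp add: right_diff_distrib exp_diff exp_minus field_simps)
  ultimately show ?thesis by (simp only:)
qed

lemma ln_less_minus_one: "0 < (y::real) \<Longrightarrow> y \<noteq> 1 \<Longrightarrow> ln y < y - 1"
  using ln_le_minus_one[of y] ln_eq_minus_one[of y] by linarith

lemma pois_tail_eps:
  fixes Z :: "'a \<Rightarrow> real" and n :: nat and \<epsilon> :: real
  assumes P: "prob_space M"
    and Zn: "\<forall>\<omega>\<in>space M. Z \<omega> \<in> \<nat>"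
    and Zm: "Z \<in> borel_measurable M"
    and pk: "\<forall>k::nat. measure M {\<omega>\<in>space M. Z \<omega> = real k} = exp (- real n) * real n ^ k / fact k"
    and e: "0 < \<epsilon>" "\<epsilon> < 1"
  shows "measure M {\<omega>\<in>space M. \<epsilon> * real n \<le> \<bar>Z \<omega> - real n\<bar>}
     \<le> exp (\<epsilon> - (1+\<epsilon>) * ln (1+\<epsilon>)) ^ n + exp (- (1-\<epsilon>) * ln (1-\<epsilon>) - \<epsilon>) ^ n"
proof -
  interpret prob_space M by fact
  define \<mu> where "\<mu> = real n"
  define A where "A = (1+\<epsilon>) * \<mu>"
  define \<theta> where "\<theta> = ln (1+\<epsilon>)"
  have th: "\<theta> > 0" using e by (simp add: \<theta>_def)
  have up: "measure M {\<omega>\<in>space M. Z \<omega> \<in> {A..}} \<le> exp (-\<theta>*A) * exp (\<mu> * (exp \<theta> - 1))"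
    apply (rule pois_weighted_bound[OF P Zn Zm, where p = "\<lambda>k. exp (-\<mu>) * \<mu> ^ k / fact k" and w = "\<lambda>k. exp (\<theta> * (real k - A))"])
    subgoal using pk by (simp add: \<mu>_def)
    subgoal using th by auto
    subgoal by simp
    by (rule exp_series_sums)
  have up2: "exp (-\<theta>*A) * exp (\<mu> * (exp \<theta> - 1)) = exp (\<epsilon> - (1+\<epsilon>) * ln (1+\<epsilon>)) ^ n"
    using e by (simp add: \<theta>_def A_def \<mu>_def exp_add[symmetric] exp_of_nat_mult[symmetric] algebra_simps)
  define B where "B = (1-\<epsilon>) * \<mu>"
  define \<eta> where "\<eta> = ln (1-\<epsilon>)"
  have et: "\<eta> < 0" using e by (simp add: \<eta>_def)
  have lo: "measure M {\<omega>\<in>space M. Z \<omega> \<in> {..B}} \<le> exp (-\<eta>*B) * exp (\<mu> * (exp \<eta> - 1))"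
    apply (rule pois_weighted_bound[OF P Zn Zm, where p = "\<lambda>k. exp (-\<mu>) * \<mu> ^ k / fact k" and w = "\<lambda>k. exp (\<eta> * (real k - B))"])
    subgoal using pk by (simp add: \<mu>_def)
    subgoal using et by (auto simp: mult_nonpos_nonpos)
    subgoal by simp
    by (rule exp_series_sums)
  have lo2: "exp (-\<eta>*B) * exp (\<mu> * (exp \<eta> - 1)) = exp (- (1-\<epsilon>) * ln (1-\<epsilon>) - \<epsilon>) ^ n"
    using e by (simp add: \<eta>_def B_def \<mu>_def exp_add[symmetric] exp_of_nat_mult[symmetric] algebra_simps)
  have sub: "{\<omega>\<in>space M. \<epsilon> * real n \<le> \<bar>Z \<omega> - real n\<bar>} \<subseteq>
     {\<omega>\<in>space M. Z \<omega> \<in> {A..}} \<union> {\<omega>\<in>space M. Z \<omega> \<in> {..B}}"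
    by (auto simp: A_def B_def \<mu>_def algebra_simps abs_if split: if_splits)
  have "measure M {\<omega>\<in>space M. \<epsilon> * real n \<le> \<bar>Z \<omega> - real n\<bar>} \<le>
     measure M ({\<omega>\<in>space M. Z \<omega> \<in> {A..}} \<union> {\<omega>\<in>space M. Z \<omega> \<in> {..B}})"
    by (rule finite_measure_mono[OF sub]) (use Zm in measurable)
  also have "\<dots> \<le> measure M {\<omega>\<in>space M. Z \<omega> \<in> {A..}} + measure M {\<omega>\<in>space M. Z \<omega> \<in> {..B}}"
    by (rule measure_Un_le) (use Zm in measurable)
  finally show ?thesis using up up2 lo lo2 by linarith
qed

lemma pois_slln:
  fixes Z :: "nat \<Rightarrow> 'a \<Rightarrow> real"
  assumes P: "prob_space M"
    and Zn: "\<forall>n. \<forall>\<omega>\<in>space M. Z n \<omega> \<in> \<nat>"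
    and Zm: "\<forall>n. Z n \<in> borel_measurable M"
    and pk: "\<forall>n. \<forall>k::nat. measure M {\<omega>\<in>space M. Z n \<omega> = real k} = exp (- real n) * real n ^ k / fact k"
  shows "AE \<omega> in M. (\<lambda>n. Z n \<omega> / real n) \<longlonglongrightarrow> 1"
proof -
  interpret prob_space M by fact
  have one: "AE \<omega> in M. eventually (\<lambda>n. \<bar>Z n \<omega> - real n\<bar> < \<epsilon> * real n) sequentially"
    if e: "0 < \<epsilon>" "\<epsilon> < 1" for \<epsilon>
  proof -
    define q1 where "q1 = exp (\<epsilon> - (1+\<epsilon>) * ln (1+\<epsilon>))"
    define q2 where "q2 = exp (- (1-\<epsilon>) * ln (1-\<epsilon>) - \<epsilon>)"
    have "ln (1/(1+\<epsilon>)) < 1/(1+\<epsilon>) - 1" using e by (intro ln_less_minus_one) auto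
    moreover have "1/(1+\<epsilon>) - 1 = - (\<epsilon>/(1+\<epsilon>))" using e by (simp add: field_simps)
    ultimately have "\<epsilon>/(1+\<epsilon>) < ln (1+\<epsilon>)" using e by (simp add: ln_div)
    then have "(1+\<epsilon>) * (\<epsilon>/(1+\<epsilon>)) < (1+\<epsilon>) * ln (1+\<epsilon>)" using e by (intro mult_strict_left_mono) auto
    then have "\<epsilon> - (1+\<epsilon>) * ln (1+\<epsilon>) < 0" using e by simp
    then have q1: "q1 < 1" "0 \<le> q1" by (auto simp: q1_def)
    have "ln (1/(1-\<epsilon>)) < 1/(1-\<epsilon>) - 1" using e by (intro ln_less_minus_one) auto
    moreover have "1/(1-\<epsilon>) - 1 = \<epsilon>/(1-\<epsilon>)" using e by (simp add: field_simps)
    ultimately have "- ln (1-\<epsilon>) < \<epsilon>/(1-\<epsilon>)" using e by (simp add: ln_div)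
    then have "(1-\<epsilon>) * (- ln (1-\<epsilon>)) < (1-\<epsilon>) * (\<epsilon>/(1-\<epsilon>))" using e by (intro mult_strict_left_mono) auto
    then have "- ((1-\<epsilon>) * ln (1-\<epsilon>)) < \<epsilon>" using e by simp
    then have "- (1-\<epsilon>) * ln (1-\<epsilon>) - \<epsilon> < 0" unfolding mult_minus_left by linarith
    then have q2: "q2 < 1" "0 \<le> q2" by (auto simp: q2_def)
    define A where "A n = {\<omega>\<in>space M. \<epsilon> * real n \<le> \<bar>Z n \<omega> - real n\<bar>}" for n
    have Am: "A n \<in> sets M" for n unfolding A_def using Zm[rule_format, of n] by measurable
    have Ale: "measure M (A n) \<le> q1 ^ n + q2 ^ n" for n
    proof -
      have "measure M {\<omega>\<in>space M. \<epsilon> * real n \<le> \<bar>Z n \<omega> - real n\<bar>} \<le> q1 ^ n + q2 ^ n"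
        unfolding q1_def q2_def
        apply (rule pois_tail_eps[OF P, where Z="Z n" and n=n])
        subgoal using Zn by blast
        subgoal using Zm by blast
        subgoal using pk by blast
        using e by auto
      then show ?thesis by (simp add: A_def)
    qed
    have "summable (\<lambda>n. q1 ^ n + q2 ^ n)"
      using q1 q2 by (intro summable_add summable_geometric) auto
    then have sA: "summable (\<lambda>n. measure M (A n))"
      by (rule summable_comparison_test'[where N=0]) (simp add: Ale)
    have fin: "emeasure M (A n) < \<infinity>" for n by (simp add: less_top[symmetric])
    from borel_cantelli_AE1[OF Am fin sA]
    have "AE \<omega> in M. eventually (\<lambda>n. \<omega> \<in> space M - A n) sequentially" .
    then show ?thesis
    proof (rule AE_mp, intro AE_I2 impI)
      fix \<omega> assume "\<omega> \<in> space M" "\<forall>\<^sub>F n in sequentially. \<omega> \<in> space M - A n"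
      then show "\<forall>\<^sub>F n in sequentially. \<bar>Z n \<omega> - real n\<bar> < \<epsilon> * real n"
        by (rule_tac eventually_mono) (auto simp: A_def not_le)
    qed
  qed
  have "AE \<omega> in M. \<forall>k::nat. eventually (\<lambda>n. \<bar>Z n \<omega> - real n\<bar> < (1 / (real k + 2)) * real n) sequentially"
    unfolding AE_all_countable
  proof
    fix k :: nat
    have "0 < 1 / (real k + 2)" "1 / (real k + 2) < 1" by (auto simp: field_simps)
    then show "AE \<omega> in M. eventually (\<lambda>n. \<bar>Z n \<omega> - real n\<bar> < (1 / (real k + 2)) * real n) sequentially"
      by (rule one)
  qed
  then show ?thesis
  proof (rule AE_mp, intro AE_I2 impI)
    fix \<omega> assume H: "\<forall>k::nat. eventually (\<lambda>n. \<bar>Z n \<omega> - real n\<bar> < (1 / (real k + 2)) * real n) sequentially"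
    show "(\<lambda>n. Z n \<omega> / real n) \<longlonglongrightarrow> 1"
    proof (rule tendstoI)
      fix e :: real assume "0 < e"
      obtain k :: nat where k: "1 / (real k + 2) < e"
      proof -
        obtain k :: nat where "1 / e < real k" using reals_Archimedean2 by blast
        then have "1 / (real k + 2) < e" using \<open>0 < e\<close> by (simp add: field_simps)
        then show ?thesis using that by blast
      qed
      have "eventually (\<lambda>n. \<bar>Z n \<omega> - real n\<bar> < (1 / (real k + 2)) * real n \<and> n \<ge> 1) sequentially"
        using H[rule_format, of k] eventually_ge_at_top[of 1] by (rule eventually_conj)
      then show "eventually (\<lambda>n. dist (Z n \<omega> / real n) 1 < e) sequentially"
      proof (rule eventually_mono)
        fix n :: nat assume a: "\<bar>Z n \<omega> - real n\<bar> < (1 / (real k + 2)) * real n \<and> n \<ge> 1"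
        then have np: "real n > 0" by simp
        have "dist (Z n \<omega> / real n) 1 = \<bar>Z n \<omega> - real n\<bar> / real n"
          using np by (simp add: dist_real_def field_simps abs_div)
        also have "\<dots> < 1 / (real k + 2)" using a np by (simp add: divide_less_eq)
        finally show "dist (Z n \<omega> / real n) 1 < e" using k by linarith
      qed
    qed
  qed
qed



lemma unif_from_seq:
  fixes y :: "real \<Rightarrow> real" and T \<epsilon> :: real
  assumes mono: "mono_on {0..} y"
    and lim: "(\<lambda>n. y (real n) / real n) \<longlonglongrightarrow> 1"
    and T: "T \<ge> 0" and e: "\<epsilon> > 0"
  shows "eventually (\<lambda>N. \<forall>u\<in>{0..T}. \<bar>y (real N * u) / real N - u\<bar> \<le> \<epsilon>) sequentially"
proof -
  define \<delta> where "\<delta> = \<epsilon> / (2 * (T + 1))"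
  have dp: "\<delta> > 0" using e T by (simp add: \<delta>_def)
  have dT: "\<delta> * T \<le> \<epsilon> / 2" using e T by (simp add: \<delta>_def field_simps)
  have "eventually (\<lambda>n. dist (y (real n) / real n) 1 < \<delta>) sequentially"
    using lim dp by (rule tendstoD)
  then obtain K0 where K0: "\<And>n. n \<ge> K0 \<Longrightarrow> dist (y (real n) / real n) 1 < \<delta>"
    by (auto simp: eventually_sequentially)
  define C0 where "C0 = (\<Sum>k\<le>K0. \<bar>y (real k) - real k\<bar>)"
  have C0: "\<bar>y (real k) - real k\<bar> \<le> C0 + \<delta> * real k" for k
  proof (cases "k \<le> K0")
    case True
    have "\<bar>y (real k) - real k\<bar> \<le> C0"
      unfolding C0_def using True by (intro member_le_sum) auto
    then show ?thesis using dp by (simp add: add_increasing2)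
  next
    case False
    have C0p: "C0 \<ge> 0" unfolding C0_def by (intro sum_nonneg) auto
    show ?thesis
    proof (cases "k = 0")
      case True then show ?thesis using C0p False by simp
    next
      case k0: False
      have kp: "real k > 0" using k0 by simp
      have "\<bar>y (real k) / real k - 1\<bar> < \<delta>" using K0[of k] False by (simp add: dist_real_def)
      then have "\<bar>(y (real k) - real k) / real k\<bar> < \<delta>" using kp by (simp add: diff_divide_distrib)
      then have "\<bar>y (real k) - real k\<bar> < \<delta> * real k" using kp by (simp add: abs_div divide_less_eq)
      then show ?thesis using C0p by linarith
    qed
  qed
  have C0p: "C0 \<ge> 0" unfolding C0_def by (intro sum_nonneg) auto
  have ev: "eventually (\<lambda>N. (C0 + 1 + \<delta>) / real N \<le> \<epsilon> / 2 \<and> N \<ge> 1) sequentially"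
  proof -
    have "((\<lambda>N. (C0 + 1 + \<delta>) / real N) \<longlongrightarrow> 0) sequentially"
      by (rule tendsto_divide_0[OF tendsto_const]) (rule filterlim_at_top_imp_at_infinity[OF filterlim_real_sequentially])
    then have "eventually (\<lambda>N. dist ((C0 + 1 + \<delta>) / real N) 0 < \<epsilon> / 2) sequentially"
      using e by (intro tendstoD) auto
    moreover have "\<bar>C0 + 1 + \<delta>\<bar> = C0 + 1 + \<delta>" using C0p dp by simp
    ultimately show ?thesis
      by (intro eventually_conj) (auto elim!: eventually_mono simp: dist_real_def eventually_ge_at_top)
  qed
  show ?thesis
    using ev
  proof (rule eventually_mono, intro ballI)
    fix N :: nat and u :: real
    assume NN: "(C0 + 1 + \<delta>) / real N \<le> \<epsilon> / 2 \<and> N \<ge> 1" and uu: "u \<in> {0..T}"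
    have N: "(C0 + 1 + \<delta>) / real N \<le> \<epsilon> / 2" "N \<ge> 1" using NN by auto
    have u: "0 \<le> u" "u \<le> T" using uu by auto
    have Np: "real N > 0" using N by simp
    define k where "k = nat \<lfloor>real N * u\<rfloor>"
    have Nu: "real N * u \<ge> 0" using u Np by simp
    have k1: "real k \<le> real N * u" using Nu by (simp add: k_def)
    have k2: "real N * u < real k + 1" using Nu by (simp add: k_def)
    have y1: "y (real k) \<le> y (real N * u)"
      using mono k1 Nu by (intro mono_onD[OF mono]) auto
    have y2: "y (real N * u) \<le> y (real (k+1))"
      using mono k2 Nu by (intro mono_onD[OF mono]) auto
    have kle: "real k \<le> real N * T" proof -
      have "real N * u \<le> real N * T" using u Np by (intro mult_left_mono) auto
      then show ?thesis using k1 by linarith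
    qed
    have c1: "\<bar>y (real k) - real k\<bar> \<le> C0 + \<delta> * real k" by (rule C0)
    have c2: "\<bar>y (real (k+1)) - real (k+1)\<bar> \<le> C0 + \<delta> * real (k+1)" by (rule C0)
    have dk: "\<delta> * real k \<le> \<delta> * (real N * T)" using kle dp by simp
    have "\<bar>y (real N * u) - real N * u\<bar> \<le> C0 + 1 + \<delta> + \<delta> * (real N * T)"
    proof -
      have e1: "y (real (k+1)) - real (k+1) \<le> C0 + \<delta> * real (k+1)" using c2 by (rule abs_le_D1)
      have e2: "-(y (real k) - real k) \<le> C0 + \<delta> * real k" using c1 by (rule abs_le_D2)
      have e3: "\<delta> * real (k+1) = \<delta> * real k + \<delta>" by (simp add: algebra_simps)
      have e4: "real (k+1) = real k + 1" by simp
      show ?thesis unfolding abs_le_iff using y1 y2 e1 e2 e3 e4 k1 k2 dk dp by linarith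
    qed
    then have "\<bar>y (real N * u) - real N * u\<bar> / real N \<le> (C0 + 1 + \<delta> + \<delta> * (real N * T)) / real N"
      using Np by (simp add: divide_right_mono)
    also have "\<dots> = (C0 + 1 + \<delta>) / real N + \<delta> * T" using Np by (simp add: field_simps)
    also have "\<dots> \<le> \<epsilon>" using N(1) dT by linarith
    finally have "\<bar>y (real N * u) - real N * u\<bar> / real N \<le> \<epsilon>" .
    moreover have "\<bar>y (real N * u) - real N * u\<bar> / real N = \<bar>y (real N * u) / real N - u\<bar>"
    proof -
      have "(y (real N * u) - real N * u) / real N = y (real N * u) / real N - u"
        using Np by (simp add: diff_divide_distrib)
      moreover have "\<bar>(y (real N * u) - real N * u) / real N\<bar> = \<bar>y (real N * u) - real N * u\<bar> / real N"
        using Np by (simp add: abs_div)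
      ultimately show ?thesis by simp
    qed
    ultimately show "\<bar>y (real N * u) / real N - u\<bar> \<le> \<epsilon>" by simp
  qed
qed



lemma lip_one:
  fixes f :: "real ^ 'n \<Rightarrow> real" and D :: "real ^ 'n \<Rightarrow> ((real ^ 'n) \<Rightarrow>\<^sub>L real)"
  assumes d: "\<forall>x. (f has_derivative blinfun_apply (D x)) (at x)" and cD: "continuous_on UNIV D"
  shows "\<exists>L. \<forall>x\<in>cball 0 R. \<forall>z\<in>cball 0 R. \<bar>f x - f z\<bar> \<le> L * norm (x - z)"
proof -
  have "compact (D ` cball 0 R)"
    by (rule compact_continuous_image) (use cD continuous_on_subset in auto)
  then obtain L where L: "\<forall>v\<in>D ` cball 0 R. norm v \<le> L"
    using compact_imp_bounded bounded_iff by metis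
  have "norm (f x - f z) \<le> L * norm (x - z)" if "x \<in> cball 0 R" "z \<in> cball 0 R" for x z
  proof (rule differentiable_bound[where S = "cball 0 R" and f' = "\<lambda>x. blinfun_apply (D x)"])
    show "convex (cball (0::real^'n) R)" by simp
    show "(f has_derivative blinfun_apply (D x)) (at x within cball 0 R)" for x
      using d has_derivative_at_withinI by blast
    show "onorm (blinfun_apply (D x)) \<le> L" if "x \<in> cball 0 R" for x
      using L that by (simp add: norm_blinfun.rep_eq[symmetric])
  qed (use that in auto)
  then show ?thesis by (metis real_norm_def)
qed

lemma lip_common:
  fixes a :: "nat \<Rightarrow> real ^ 'n \<Rightarrow> real"
  assumes a_C1: "\<forall>j<m. \<exists>D :: real ^ 'n \<Rightarrow> ((real ^ 'n) \<Rightarrow>\<^sub>L real).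
       (\<forall>x. (a j has_derivative blinfun_apply (D x)) (at x)) \<and> continuous_on UNIV D"
  shows "\<exists>L\<ge>0. \<forall>j<m. \<forall>x\<in>cball 0 R. \<forall>z\<in>cball 0 R. \<bar>a j x - a j z\<bar> \<le> L * norm (x - z)"
proof -
  have "\<forall>j<m. \<exists>L. \<forall>x\<in>cball 0 R. \<forall>z\<in>cball 0 R. \<bar>a j x - a j z\<bar> \<le> L * norm (x - z)"
    using a_C1 lip_one by metis
  then obtain Lf where Lf: "\<forall>j<m. \<forall>x\<in>cball 0 R. \<forall>z\<in>cball 0 R. \<bar>a j x - a j z\<bar> \<le> Lf j * norm (x - z)"
    by metis
  define L where "L = (\<Sum>j<m. \<bar>Lf j\<bar>)"
  have "\<bar>a j x - a j z\<bar> \<le> L * norm (x - z)" if "j < m" "x\<in>cball 0 R" "z\<in>cball 0 R" for j x z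
  proof -
    have "\<bar>Lf j\<bar> \<le> L" unfolding L_def using that by (intro member_le_sum) auto
    then have "Lf j * norm (x - z) \<le> L * norm (x - z)"
      by (intro mult_right_mono) auto
    then show ?thesis using Lf that by fastforce
  qed
  moreover have "L \<ge> 0" unfolding L_def by (intro sum_nonneg) auto
  ultimately show ?thesis by blast
qed



lemma est_N:
  fixes m :: nat and \<nu> :: "nat \<Rightarrow> real ^ 'n" and c :: "nat \<Rightarrow> real"
    and b :: "nat \<Rightarrow> nat \<Rightarrow> real ^ 'n \<Rightarrow> real" and a :: "nat \<Rightarrow> real ^ 'n \<Rightarrow> real"
    and x0 :: "real ^ 'n" and XN :: "real \<Rightarrow> real ^ 'n" and y :: "nat \<Rightarrow> real \<Rightarrow> real"
    and X :: "real \<Rightarrow> real ^ 'n" and N :: nat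
  assumes N1: "N \<ge> 1" and t: "t > 0"
    and c_pos: "\<forall>j<m. c j > 0"
    and b_nonneg: "\<forall>j<m. \<forall>x\<in>Zplus. b j N x \<ge> 0"
    and acont: "\<forall>j<m. continuous_on UNIV (a j)"
    and Xbd: "\<forall>u\<in>{0..t}. norm (X u) \<le> R" and GR: "\<Gamma> \<le> R"
    and L: "L \<ge> 0" and Lip: "\<forall>j<m. \<forall>x\<in>cball 0 R. \<forall>z\<in>cball 0 R. \<bar>a j x - a j z\<bar> \<le> L * norm (x - z)"
    and A0: "\<forall>j<m. \<forall>x\<in>cball 0 R. \<bar>a j x\<bar> \<le> A0"
    and B: "B \<ge> 0"
    and rate: "\<forall>x\<in>Rplus \<inter> cball 0 \<Gamma>. \<forall>j<m. \<bar>c j * b j N (real N *\<^sub>R x) / real N - a j x\<bar> \<le> B / real N"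
    and XS: "\<forall>s\<ge>0. XN s \<in> Zplus \<and>
       (\<forall>j<m. (\<lambda>u. c j * b j N (XN u)) integrable_on {0..s}) \<and>
       XN s = real N *\<^sub>R x0 +
         (\<Sum>j<m. y j (integral {0..s} (\<lambda>u. c j * b j N (XN u))) *\<^sub>R \<nu> j)"
    and bdd: "\<forall>s\<ge>0. norm ((1 / real N) *\<^sub>R XN s) \<le> \<Gamma>"
    and e0: "\<epsilon> \<ge> 0" and ycl: "\<forall>j<m. \<forall>u\<in>{0..(A0 + B) * t}. \<bar>y j (real N * u) / real N - u\<bar> \<le> \<epsilon>"
    and X_cont: "continuous_on {0..} X"
    and X_eq: "\<forall>s\<ge>0. X s = x0 + (\<Sum>j<m. integral {0..s} (\<lambda>u. a j (X u)) *\<^sub>R \<nu> j)"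
  shows "norm ((1 / real N) *\<^sub>R XN t - X t)
     \<le> 2 * exp ((2 * (\<Sum>j<m. norm (\<nu> j)) * L + 1) * t) * (\<Sum>j<m. norm (\<nu> j)) * (\<epsilon> + B * t / real N)"
proof -
  define V where "V = (\<Sum>j<m. norm (\<nu> j))"
  define lam where "lam = 2 * V * L + 1"
  have V0: "V \<ge> 0" unfolding V_def by (intro sum_nonneg) auto
  have VL: "V * L \<ge> 0" using V0 L by simp
  have lam: "lam > 0" "V * L / lam \<le> 1/2"
  proof -
    show lp: "lam > 0" using VL by (simp add: lam_def)
    have "V * L \<le> lam / 2" using VL by (simp add: lam_def)
    then show "V * L / lam \<le> 1/2" using lp by (simp add: divide_le_eq)
  qed
  have Np: "real N > 0" using N1 by simp
  define Z where "Z u = (1 / real N) *\<^sub>R XN u" for u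
  have NZ: "real N *\<^sub>R Z u = XN u" for u using Np by (simp add: Z_def)
  have ZK: "Z u \<in> Rplus \<inter> cball 0 \<Gamma>" if "u \<ge> 0" for u
  proof -
    have "XN u \<in> Zplus" using XS that by blast
    then have "\<forall>i. XN u $ i \<in> \<nat>" unfolding Zplus_def by blast
    then have "\<forall>i. 0 \<le> XN u $ i" by (metis Nats_cases of_nat_0_le_iff)
    then have "Z u \<in> Rplus" using Np by (simp add: Z_def Rplus_def)
    moreover have "norm (Z u) \<le> \<Gamma>" using bdd that by (simp add: Z_def)
    ultimately show ?thesis by simp
  qed
  have ZR: "Z u \<in> cball 0 R" if "u \<ge> 0" for u using ZK[OF that] GR by auto
  have XR: "X u \<in> cball 0 R" if "u \<in> {0..t}" for u using Xbd that by auto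
  define g where "g j u = c j * b j N (XN u) / real N" for j u
  have g_rate: "\<bar>g j u - a j (Z u)\<bar> \<le> B / real N" if "j < m" "u \<ge> 0" for j u
  proof -
    have "\<bar>c j * b j N (real N *\<^sub>R Z u) / real N - a j (Z u)\<bar> \<le> B / real N"
      using rate ZK[OF that(2)] that(1) by blast
    then show ?thesis by (simp add: g_def NZ)
  qed
  have g_nonneg: "g j u \<ge> 0" if "j < m" "u \<ge> 0" for j u
  proof -
    have "XN u \<in> Zplus" using XS that by blast
    then have "0 \<le> b j N (XN u)" "0 < c j" using b_nonneg c_pos that by auto
    then show ?thesis using Np by (simp add: g_def)
  qed
  have g_le: "g j u \<le> A0 + B" if "j < m" "u \<ge> 0" for j u
  proof -
    have "\<bar>a j (Z u)\<bar> \<le> A0" using A0 ZR[OF that(2)] that(1) by blast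
    moreover have "B / real N \<le> B" using B N1 by (simp add: divide_le_eq mult_le_cancel_left1)
    ultimately show ?thesis using g_rate[OF that] by linarith
  qed
  have g_int: "g j integrable_on {0..s}" if "j < m" "s \<ge> 0" for j s
  proof -
    have "(\<lambda>u. c j * b j N (XN u)) integrable_on {0..s}" using XS that by blast
    then show ?thesis unfolding g_def using Np integrable_on_cdivide_iff[of "real N"] by simp
  qed
  have int_eq: "integral {0..s} (\<lambda>u. c j * b j N (XN u)) = real N * integral {0..s} (g j)" for j s
  proof -
    have "integral {0..s} (g j) = integral {0..s} (\<lambda>u. c j * b j N (XN u)) / real N"
      unfolding g_def by (rule integral_divide)
    then show ?thesis using Np by simp
  qed
  have aX_int: "(\<lambda>u. a j (X u)) integrable_on {0..s}" if "j < m" "s \<in> {0..t}" for j s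
  proof (rule integrable_continuous_interval)
    show "continuous_on {0..s} (\<lambda>u. a j (X u))"
    proof -
      have "continuous_on {0..s} X" using X_cont by (rule continuous_on_subset) auto
      moreover have "continuous_on (X ` {0..s}) (a j)" using acont that continuous_on_subset by blast
      ultimately show ?thesis using continuous_on_compose[of "{0..s}" X "a j"] by (simp add: o_def)
    qed
  qed
  have tau_bd: "0 \<le> integral {0..s} (g j) \<and> integral {0..s} (g j) \<le> (A0 + B) * t"
    if "j < m" "s \<in> {0..t}" for j s
  proof
    show "0 \<le> integral {0..s} (g j)"
      using g_int[OF that(1)] g_nonneg[OF that(1)] that by (intro integral_nonneg) auto
    have "integral {0..s} (g j) \<le> integral {0..s} (\<lambda>u. A0 + B)"
      using g_int[OF that(1)] g_le[OF that(1)] that by (intro integral_le) auto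
    also have "\<dots> = s * (A0 + B)" using that by simp
    also have "\<dots> \<le> (A0 + B) * t"
    proof -
      have "A0 + B \<ge> 0" using g_le[OF that(1), of 0] g_nonneg[OF that(1), of 0] by simp
      then have "s * (A0 + B) \<le> t * (A0 + B)" using that by (intro mult_right_mono) auto
      then show ?thesis by (simp add: mult.commute)
    qed
    finally show "integral {0..s} (g j) \<le> (A0 + B) * t" .
  qed
  have diff_eq: "Z s - X s = (\<Sum>j<m. (y j (real N * integral {0..s} (g j)) / real N
        - integral {0..s} (\<lambda>u. a j (X u))) *\<^sub>R \<nu> j)" if "s \<ge> 0" for s
  proof -
    have "Z s = x0 + (\<Sum>j<m. (y j (real N * integral {0..s} (g j)) / real N) *\<^sub>R \<nu> j)"
    proof -
      have e: "XN s = real N *\<^sub>R x0 + (\<Sum>j<m. y j (real N * integral {0..s} (g j)) *\<^sub>R \<nu> j)"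
        using XS that unfolding int_eq by blast
      show ?thesis unfolding Z_def e using Np
        by (simp add: scaleR_sum_right scaleR_add_right divide_inverse mult.commute)
    qed
    then show ?thesis using X_eq that by (simp add: scaleR_diff_left sum_subtractf)
  qed
  define phi where "phi u = norm (Z u - X u)" for u
  define psi where "psi = (SUP u\<in>{0..t}. exp (- lam * u) * phi u)"
  have bddA: "bdd_above ((\<lambda>u. exp (- lam * u) * phi u) ` {0..t})"
  proof (rule bdd_aboveI2)
    fix u assume u: "u \<in> {0..t}"
    have "exp (- lam * u) \<le> 1" using lam u by simp
    moreover have "phi u \<le> 2 * R" using ZR[of u] XR[OF u] u unfolding phi_def
      by (smt (verit) mem_cball_0 norm_triangle_ineq4 atLeastAtMost_iff)
    ultimately show "exp (- lam * u) * phi u \<le> 2 * R"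
      by (smt (verit, best) mult_left_le_one_le exp_gt_zero mult_nonneg_nonneg norm_ge_zero phi_def)
  qed
  have psi_ge: "exp (- lam * u) * phi u \<le> psi" if "u \<in> {0..t}" for u
    unfolding psi_def using bddA that by (rule cSUP_upper2) auto
  have psi0: "psi \<ge> 0" using psi_ge[of 0] t by (simp add: phi_def) (meson norm_ge_zero order_trans)
  have phi_le: "phi u \<le> exp (lam * u) * psi" if "u \<in> {0..t}" for u
  proof -
    have "exp (lam * u) * (exp (- lam * u) * phi u) \<le> exp (lam * u) * psi"
      using psi_ge[OF that] by simp
    then show ?thesis by (simp add: exp_minus field_simps)
  qed
  have key: "phi s \<le> V * (\<epsilon> + B * t / real N) + V * L * psi * exp (lam * s) / lam"
    if s: "s \<in> {0..t}" for s
  proof -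
    define h where "h u = B / real N + L * (exp (lam * u) * psi)" for u
    have hint: "(h has_integral (B / real N * s + (L * psi) * (exp (lam * s) / lam - 1 / lam))) {0..s}"
    proof -
      have e: "((\<lambda>u. exp (lam * u)) has_integral (exp (lam * s) / lam - exp (lam * 0) / lam)) {0..s}"
        using s lam
        by (intro fundamental_theorem_of_calculus)
           (auto intro!: derivative_eq_intros simp: has_real_derivative_iff_has_vector_derivative[symmetric])
      have "((\<lambda>u. B / real N + (L * psi) * exp (lam * u)) has_integral
          (Henstock_Kurzweil_Integration.content {0..s} *\<^sub>R (B / real N) + (L * psi) * (exp (lam * s) / lam - exp (lam * 0) / lam))) {0..s}"
        by (intro has_integral_add has_integral_const_real has_integral_mult_right e)
      moreover have hh: "h = (\<lambda>u. B / real N + (L * psi) * exp (lam * u))" by (auto simp: h_def fun_eq_iff)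
      moreover have v: "Henstock_Kurzweil_Integration.content {0..s} *\<^sub>R (B / real N) + (L * psi) * (exp (lam * s) / lam - exp (lam * 0) / lam)
          = B / real N * s + (L * psi) * (exp (lam * s) / lam - 1 / lam)"
        using s by simp
      ultimately show ?thesis using s by (simp add: mult.commute)
    qed
    have hbound: "B / real N * s + (L * psi) * (exp (lam * s) / lam - 1 / lam) \<le> B * t / real N + L * psi * exp (lam * s) / lam"
    proof -
      have "B / real N * s \<le> B * t / real N" using s B Np by (simp add: divide_right_mono mult_left_mono field_simps)
      moreover have "(L * psi) * (exp (lam * s) / lam - 1 / lam) \<le> (L * psi) * (exp (lam * s) / lam)"
        using L psi0 lam by (intro mult_left_mono) auto
      then have "(L * psi) * (exp (lam * s) / lam - 1 / lam) \<le> L * psi * exp (lam * s) / lam" by simp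
      ultimately show ?thesis by linarith
    qed
    have trm: "\<bar>y j (real N * integral {0..s} (g j)) / real N - integral {0..s} (\<lambda>u. a j (X u))\<bar>
        \<le> \<epsilon> + (B * t / real N + L * psi * exp (lam * s) / lam)" if j: "j < m" for j
    proof -
      have t1: "\<bar>y j (real N * integral {0..s} (g j)) / real N - integral {0..s} (g j)\<bar> \<le> \<epsilon>"
      proof -
        have "integral {0..s} (g j) \<in> {0..(A0 + B) * t}" using tau_bd[OF j s] by simp
        then show ?thesis using ycl j by blast
      qed
      have "norm (integral {0..s} (\<lambda>u. g j u - a j (X u))) \<le> integral {0..s} h"
      proof (rule integral_norm_bound_integral)
        show "(\<lambda>u. g j u - a j (X u)) integrable_on {0..s}"
          using g_int[OF j] aX_int[OF j s] s by (intro integrable_diff) auto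
        show "h integrable_on {0..s}" using hint by blast
        fix u assume u: "u \<in> {0..s}"
        then have u': "u \<in> {0..t}" using s by auto
        have "\<bar>a j (Z u) - a j (X u)\<bar> \<le> L * norm (Z u - X u)"
          using Lip j ZR[of u] XR[OF u'] u by auto
        also have "\<dots> \<le> L * (exp (lam * u) * psi)"
          using phi_le[OF u'] L by (simp add: phi_def mult_left_mono)
        finally have "\<bar>a j (Z u) - a j (X u)\<bar> \<le> L * (exp (lam * u) * psi)" .
        moreover have "\<bar>g j u - a j (Z u)\<bar> \<le> B / real N" using g_rate[OF j] u by auto
        ultimately show "norm (g j u - a j (X u)) \<le> h u" unfolding h_def by simp
      qed
      also have "\<dots> = B / real N * s + (L * psi) * (exp (lam * s) / lam - 1 / lam)"
        using hint by (rule integral_unique)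
      finally have t2: "\<bar>integral {0..s} (g j) - integral {0..s} (\<lambda>u. a j (X u))\<bar>
          \<le> B * t / real N + L * psi * exp (lam * s) / lam"
        using integral_diff[OF g_int[OF j] aX_int[OF j s]] s hbound by simp
      show ?thesis using t1 t2 by linarith
    qed
    have "phi s \<le> (\<Sum>j<m. norm ((y j (real N * integral {0..s} (g j)) / real N
        - integral {0..s} (\<lambda>u. a j (X u))) *\<^sub>R \<nu> j))"
    proof -
      have d: "Z s - X s = (\<Sum>j<m. (y j (real N * integral {0..s} (g j)) / real N
        - integral {0..s} (\<lambda>u. a j (X u))) *\<^sub>R \<nu> j)" using s by (intro diff_eq) auto
      show ?thesis unfolding phi_def d by (rule norm_sum)
    qed
    also have "\<dots> \<le> (\<Sum>j<m. (\<epsilon> + (B * t / real N + L * psi * exp (lam * s) / lam)) * norm (\<nu> j))"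
      using trm by (intro sum_mono) (auto intro: mult_right_mono)
    also have "\<dots> = (\<epsilon> + (B * t / real N + L * psi * exp (lam * s) / lam)) * V"
      by (simp only: V_def sum_distrib_left)
    also have "\<dots> = V * (\<epsilon> + B * t / real N) + V * L * psi * exp (lam * s) / lam"
      by (simp add: algebra_simps)
    finally show ?thesis .
  qed
  have psi_bd: "psi \<le> 2 * V * (\<epsilon> + B * t / real N)"
  proof -
    have "(SUP u\<in>{0..t}. exp (- lam * u) * phi u) \<le> V * (\<epsilon> + B * t / real N) + psi / 2"
    proof (rule cSUP_least)
      show "{0..t} \<noteq> {}" using t by simp
      fix u assume u: "u \<in> {0..t}"
      have "exp (- lam * u) * phi u \<le> exp (- lam * u) * (V * (\<epsilon> + B * t / real N) + V * L * psi * exp (lam * u) / lam)"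
        using key[OF u] by (simp add: mult_left_mono)
      also have "\<dots> = exp (- lam * u) * (V * (\<epsilon> + B * t / real N)) + (V * L / lam) * psi"
        by (simp add: exp_minus field_simps)
      also have "\<dots> \<le> V * (\<epsilon> + B * t / real N) + (1/2) * psi"
      proof -
        have ex: "exp (- lam * u) \<le> 1" using lam u by simp
        have k0: "0 \<le> V * (\<epsilon> + B * t / real N)"
          using V0 B t Np e0 by simp
        have "exp (- lam * u) * (V * (\<epsilon> + B * t / real N)) \<le> V * (\<epsilon> + B * t / real N)"
          using ex k0 by (simp add: mult_left_le_one_le)
        moreover have "(V * L / lam) * psi \<le> (1/2) * psi" using lam psi0 by (intro mult_right_mono) auto
        ultimately show ?thesis by linarith
      qed
      finally show "exp (- lam * u) * phi u \<le> V * (\<epsilon> + B * t / real N) + psi / 2" by simp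
    qed
    then show ?thesis unfolding psi_def[symmetric] by linarith
  qed
  have "phi t \<le> exp (lam * t) * psi" using phi_le[of t] t by simp
  also have "\<dots> \<le> exp (lam * t) * (2 * V * (\<epsilon> + B * t / real N))"
    using psi_bd by simp
  finally show ?thesis by (simp add: phi_def Z_def V_def lam_def mult_ac)
qed



lemma conv:
  fixes m :: nat and \<nu> :: "nat \<Rightarrow> real ^ 'n" and c :: "nat \<Rightarrow> real"
    and b :: "nat \<Rightarrow> nat \<Rightarrow> real ^ 'n \<Rightarrow> real" and a :: "nat \<Rightarrow> real ^ 'n \<Rightarrow> real"
    and x0 :: "real ^ 'n" and XN :: "nat \<Rightarrow> real \<Rightarrow> real ^ 'n" and y :: "nat \<Rightarrow> real \<Rightarrow> real"
    and X :: "real \<Rightarrow> real ^ 'n" and S :: "nat set"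
  assumes t: "t > 0"
    and c_pos: "\<forall>j<m. c j > 0"
    and b_nonneg: "\<forall>j<m. \<forall>N\<ge>1. \<forall>x\<in>Zplus. b j N x \<ge> 0"
    and a_rate: "\<forall>K. compact K \<and> K \<subseteq> Rplus \<longrightarrow> (\<exists>B>0. \<forall>x\<in>K. \<forall>N\<ge>1. \<forall>j<m.
       \<bar>c j * b j N (real N *\<^sub>R x) / real N - a j x\<bar> \<le> B / real N)"
    and a_C1: "\<forall>j<m. \<exists>D :: real ^ 'n \<Rightarrow> ((real ^ 'n) \<Rightarrow>\<^sub>L real).
       (\<forall>x. (a j has_derivative blinfun_apply (D x)) (at x)) \<and> continuous_on UNIV D"
    and S1: "\<forall>N\<in>S. N \<ge> 1"
    and XS: "\<forall>N\<in>S. \<forall>s\<ge>0. XN N s \<in> Zplus \<and>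
       (\<forall>j<m. (\<lambda>u. c j * b j N (XN N u)) integrable_on {0..s}) \<and>
       XN N s = real N *\<^sub>R x0 +
         (\<Sum>j<m. y j (integral {0..s} (\<lambda>u. c j * b j N (XN N u))) *\<^sub>R \<nu> j)"
    and bdd: "\<forall>N\<in>S. \<forall>s\<ge>0. norm ((1 / real N) *\<^sub>R XN N s) \<le> \<Gamma>"
    and ymono: "\<forall>j<m. mono_on {0..} (y j)"
    and ylim: "\<forall>j<m. (\<lambda>n. y j (real n) / real n) \<longlonglongrightarrow> 1"
    and X_cont: "continuous_on {0..} X"
    and X_eq: "\<forall>s\<ge>0. X s = x0 + (\<Sum>j<m. integral {0..s} (\<lambda>u. a j (X u)) *\<^sub>R \<nu> j)"
  shows "((\<lambda>N. (1 / real N) *\<^sub>R XN N t) \<longlongrightarrow> X t) (inf sequentially (principal S))"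
proof -
  have "compact (X ` {0..t})"
    by (rule compact_continuous_image) (rule continuous_on_subset[OF X_cont], auto)
  then obtain R1 where R1: "\<forall>v\<in>X ` {0..t}. norm v \<le> R1"
    using compact_imp_bounded bounded_iff by metis
  define R where "R = max (max \<Gamma> R1) 0"
  have Xbd: "\<forall>u\<in>{0..t}. norm (X u) \<le> R" using R1 by (auto simp: R_def)
  have GR: "\<Gamma> \<le> R" by (simp add: R_def)
  have R0: "R \<ge> 0" by (simp add: R_def)
  obtain L where L: "L \<ge> 0" and Lip: "\<forall>j<m. \<forall>x\<in>cball 0 R. \<forall>z\<in>cball 0 R. \<bar>a j x - a j z\<bar> \<le> L * norm (x - z)"
    using lip_common[OF a_C1, of R] by blast
  define A0 where "A0 = (\<Sum>j<m. \<bar>a j 0\<bar>) + L * R"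
  have A0: "\<forall>j<m. \<forall>x\<in>cball 0 R. \<bar>a j x\<bar> \<le> A0"
  proof (intro allI impI ballI)
    fix j x assume j: "j < m" and x: "x \<in> cball (0::real^'n) R"
    have z: "(0::real^'n) \<in> cball 0 R" using R0 by simp
    have "\<bar>a j x - a j 0\<bar> \<le> L * norm (x - 0)" using Lip j x z by blast
    also have "\<dots> \<le> L * R" using x L by (auto intro: mult_left_mono)
    finally have "\<bar>a j x\<bar> \<le> \<bar>a j 0\<bar> + L * R" by linarith
    moreover have "\<bar>a j 0\<bar> \<le> (\<Sum>j<m. \<bar>a j 0\<bar>)" using j by (intro member_le_sum) auto
    ultimately show "\<bar>a j x\<bar> \<le> A0" by (simp add: A0_def)
  qed
  have A00: "A0 \<ge> 0" unfolding A0_def using L R0 by (intro add_nonneg_nonneg sum_nonneg) auto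
  have acont: "\<forall>j<m. continuous_on UNIV (a j)"
  proof (intro allI impI)
    fix j assume "j < m"
    then obtain D :: "real ^ 'n \<Rightarrow> ((real ^ 'n) \<Rightarrow>\<^sub>L real)" where "\<forall>x. (a j has_derivative blinfun_apply (D x)) (at x)"
      using a_C1 by blast
    then show "continuous_on UNIV (a j)"
      by (intro continuous_at_imp_continuous_on) (auto intro: has_derivative_continuous)
  qed
  define K where "K = Rplus \<inter> cball (0::real^'n) \<Gamma>"
  have "compact K"
  proof -
    have "closed (Rplus :: (real^'n) set)" unfolding Rplus_def by (rule closed_positive_orthant)
    then show ?thesis unfolding K_def by (intro closed_Int_compact) auto
  qed
  then obtain B where B: "B > 0" and rate: "\<forall>x\<in>K. \<forall>N\<ge>1. \<forall>j<m.
       \<bar>c j * b j N (real N *\<^sub>R x) / real N - a j x\<bar> \<le> B / real N"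
    using a_rate K_def by blast
  define V where "V = (\<Sum>j<m. norm (\<nu> j))"
  define lam where "lam = 2 * V * L + 1"
  define C where "C = 2 * exp (lam * t) * V"
  have C0: "C \<ge> 0" unfolding C_def V_def by (intro mult_nonneg_nonneg sum_nonneg) auto
  show ?thesis
  proof (rule tendstoI)
    fix \<delta> :: real assume \<delta>: "\<delta> > 0"
    define \<epsilon> where "\<epsilon> = \<delta> / (4 * (C + 1))"
    have ep: "\<epsilon> > 0" using \<delta> C0 by (simp add: \<epsilon>_def)
    have Tn: "(A0 + B) * t \<ge> 0" using A00 B t by simp
    have ev1: "eventually (\<lambda>N. \<forall>j\<in>{..<m}. \<forall>u\<in>{0..(A0 + B) * t}. \<bar>y j (real N * u) / real N - u\<bar> \<le> \<epsilon>) sequentially"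
      using ymono ylim Tn ep by (intro eventually_ball_finite) (auto intro!: unif_from_seq)
    have ev2: "eventually (\<lambda>N. B * t / real N \<le> \<epsilon>) sequentially"
    proof -
      have "((\<lambda>N. (B * t) / real N) \<longlongrightarrow> 0) sequentially"
        by (rule tendsto_divide_0[OF tendsto_const]) (rule filterlim_at_top_imp_at_infinity[OF filterlim_real_sequentially])
      then have "eventually (\<lambda>N. dist ((B * t) / real N) 0 < \<epsilon>) sequentially"
        using ep by (intro tendstoD) auto
      moreover have "\<bar>B * t\<bar> = B * t" using B t by simp
      ultimately show ?thesis by (auto elim!: eventually_mono simp: dist_real_def)
    qed
    have "eventually (\<lambda>N. N \<in> S \<longrightarrow> dist ((1 / real N) *\<^sub>R XN N t) (X t) < \<delta>) sequentially"
      using ev1 ev2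
    proof (eventually_elim, intro impI)
      fix N assume e1: "\<forall>j\<in>{..<m}. \<forall>u\<in>{0..(A0 + B) * t}. \<bar>y j (real N * u) / real N - u\<bar> \<le> \<epsilon>"
        and e2: "B * t / real N \<le> \<epsilon>" and NS: "N \<in> S"
      have N1: "N \<ge> 1" using S1 NS by blast
      have est: "norm ((1 / real N) *\<^sub>R XN N t - X t)
         \<le> 2 * exp ((2 * (\<Sum>j<m. norm (\<nu> j)) * L + 1) * t) * (\<Sum>j<m. norm (\<nu> j)) * (\<epsilon> + B * t / real N)"
      proof (rule est_N[where c = c and b = b and a = a and y = y and R = R and \<Gamma> = \<Gamma> and ?A0.0 = A0 and B = B])
        show "N \<ge> 1" by fact
        show "t > 0" by fact
        show "\<forall>j<m. c j > 0" by fact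
        show "\<forall>j<m. \<forall>x\<in>Zplus. b j N x \<ge> 0" using b_nonneg N1 by blast
        show "\<forall>j<m. continuous_on UNIV (a j)" by fact
        show "\<forall>u\<in>{0..t}. norm (X u) \<le> R" by fact
        show "\<Gamma> \<le> R" by fact
        show "L \<ge> 0" by fact
        show "\<forall>j<m. \<forall>x\<in>cball 0 R. \<forall>z\<in>cball 0 R. \<bar>a j x - a j z\<bar> \<le> L * norm (x - z)" by fact
        show "\<forall>j<m. \<forall>x\<in>cball 0 R. \<bar>a j x\<bar> \<le> A0" by fact
        show "B \<ge> 0" using B by simp
        show "\<forall>x\<in>Rplus \<inter> cball 0 \<Gamma>. \<forall>j<m. \<bar>c j * b j N (real N *\<^sub>R x) / real N - a j x\<bar> \<le> B / real N"
          using rate N1 K_def by blast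
        show "\<forall>s\<ge>0. XN N s \<in> Zplus \<and>
           (\<forall>j<m. (\<lambda>u. c j * b j N (XN N u)) integrable_on {0..s}) \<and>
           XN N s = real N *\<^sub>R x0 + (\<Sum>j<m. y j (integral {0..s} (\<lambda>u. c j * b j N (XN N u))) *\<^sub>R \<nu> j)"
          using XS NS by blast
        show "\<forall>s\<ge>0. norm ((1 / real N) *\<^sub>R XN N s) \<le> \<Gamma>" using bdd NS by blast
        show "\<epsilon> \<ge> 0" using ep by simp
        show "\<forall>j<m. \<forall>u\<in>{0..(A0 + B) * t}. \<bar>y j (real N * u) / real N - u\<bar> \<le> \<epsilon>" using e1 by blast
        show "continuous_on {0..} X" by fact
        show "\<forall>s\<ge>0. X s = x0 + (\<Sum>j<m. integral {0..s} (\<lambda>u. a j (X u)) *\<^sub>R \<nu> j)" by fact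
      qed
      have "C * (\<epsilon> + B * t / real N) \<le> C * (2 * \<epsilon>)" using e2 C0 by (intro mult_left_mono) auto
      also have "\<dots> < \<delta>"
      proof -
        have "C * (2 * \<epsilon>) = \<delta> * (2 * C) / (4 * (C + 1))" by (simp add: \<epsilon>_def)
        also have "\<dots> < \<delta>" using \<delta> C0 by (simp add: divide_less_eq)
        finally show ?thesis .
      qed
      finally show "dist ((1 / real N) *\<^sub>R XN N t) (X t) < \<delta>"
        using est by (simp add: dist_norm C_def V_def lam_def)
    qed
    then show "eventually (\<lambda>N. dist ((1 / real N) *\<^sub>R XN N t) (X t) < \<delta>) (inf sequentially (principal S))"
      by (simp add: eventually_inf_principal)
  qed
qed



lemma Zplus_scale_Rplus:
  assumes "v \<in> Zplus" "N \<ge> (1::nat)"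
  shows "(1 / real N) *\<^sub>R v \<in> Rplus"
proof -
  have "\<forall>i. v $ i \<in> \<nat>" using assms unfolding Zplus_def by blast
  then have "\<forall>i. 0 \<le> v $ i" by (metis Nats_cases of_nat_0_le_iff)
  then show ?thesis using assms by (simp add: Rplus_def)
qed

theorem lemma3p4:
  fixes m :: nat
    and \<nu> :: "nat \<Rightarrow> real ^ 'n"
    and c :: "nat \<Rightarrow> real"
    and b :: "nat \<Rightarrow> nat \<Rightarrow> real ^ 'n \<Rightarrow> real"
    and a :: "nat \<Rightarrow> real ^ 'n \<Rightarrow> real"
    and x0 :: "real ^ 'n"
    and M :: "'a measure"
    and Y :: "nat \<Rightarrow> 'a \<Rightarrow> real \<Rightarrow> real"
    and XN :: "nat \<Rightarrow> 'a \<Rightarrow> real \<Rightarrow> real ^ 'n"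
    and fN :: "nat \<Rightarrow> real ^ 'n \<Rightarrow> real"
    and f :: "real ^ 'n \<Rightarrow> real"
    and \<alpha> :: real
    and X :: "real \<Rightarrow> real ^ 'n"
    and t :: real
  assumes m_pos: "m \<ge> 1"
    and nu_int: "\<forall>j<m. \<nu> j \<in> Zvec"
    and c_pos: "\<forall>j<m. c j > 0"
    and b_nonneg: "\<forall>j<m. \<forall>N\<ge>1. \<forall>x\<in>Zplus. b j N x \<ge> 0"
    \<comment> \<open>(i): a_j(x) = lim a_j^N(Nx)/N with rate 1/N uniformly on compacts of R_+^n\<close>
    and a_lim: "\<forall>j<m. \<forall>x\<in>Rplus.
       ((\<lambda>N. c j * b j N (real N *\<^sub>R x) / real N) \<longlongrightarrow> a j x) sequentially"
    and a_rate: "\<forall>K. compact K \<and> K \<subseteq> Rplus \<longrightarrow> (\<exists>B>0. \<forall>x\<in>K. \<forall>N\<ge>1. \<forall>j<m.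
       \<bar>c j * b j N (real N *\<^sub>R x) / real N - a j x\<bar> \<le> B / real N)"
    \<comment> \<open>(ii): each a_j is continuously differentiable on R^n\<close>
    and a_C1: "\<forall>j<m. \<exists>D :: real ^ 'n \<Rightarrow> ((real ^ 'n) \<Rightarrow>\<^sub>L real).
       (\<forall>x. (a j has_derivative blinfun_apply (D x)) (at x)) \<and> continuous_on UNIV D"
    \<comment> \<open>(iii): Poisson processes and the random time-change equation for X^N\<close>
    and x0_pos: "x0 \<in> Rplus"
    and Y_poisson: "indep_unit_poisson M m Y"
    and XN_eq: "\<forall>N\<ge>1. real N *\<^sub>R x0 \<in> Zplus \<longrightarrow> (AE \<omega> in M. \<forall>s\<ge>0.
       XN N \<omega> s \<in> Zplus \<and>
       (\<forall>j<m. (\<lambda>u. c j * b j N (XN N \<omega> u)) integrable_on {0..s}) \<and>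
       XN N \<omega> s = real N *\<^sub>R x0 +
         (\<Sum>j<m. Y j \<omega> (integral {0..s} (\<lambda>u. c j * b j N (XN N \<omega> u))) *\<^sub>R \<nu> j))"
    \<comment> \<open>(iv): uniform bound on X_N = X^N / N\<close>
    and XN_bdd: "\<exists>\<Gamma>. \<forall>N\<ge>1. real N *\<^sub>R x0 \<in> Zplus \<longrightarrow>
       (AE \<omega> in M. \<forall>s\<ge>0. norm ((1 / real N) *\<^sub>R XN N \<omega> s) \<le> \<Gamma>)"
    \<comment> \<open>(v)\<close>
    and alpha_pos: "\<alpha> > 0"
    and f_rate: "\<forall>K. compact K \<and> K \<subseteq> Rplus \<longrightarrow> (\<exists>L. \<forall>x\<in>K. \<forall>N\<ge>1.
       \<bar>fN N (real N *\<^sub>R x) / real N powr \<alpha> - f x\<bar> \<le> L / sqrt (real N))"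
    \<comment> \<open>X solves the deterministic integral equation\<close>
    and X_cont: "continuous_on {0..} X"
    and X_eq: "\<forall>s\<ge>0. X s = x0 + (\<Sum>j<m. integral {0..s} (\<lambda>u. a j (X u)) *\<^sub>R \<nu> j)"
    and t_pos: "t > 0"
    and f_cont: "isCont f (X t)"
  shows "AE \<omega> in M.
    ((\<lambda>N. \<bar>fN N (real N *\<^sub>R ((1 / real N) *\<^sub>R XN N \<omega> t)) / real N powr \<alpha> - f (X t)\<bar>)
       \<longlongrightarrow> 0)
    (inf sequentially (principal {N. N \<ge> 1 \<and> real N *\<^sub>R x0 \<in> Zplus}))"
  proof -
  have P: "prob_space M" using Y_poisson by (simp add: indep_unit_poisson_def)
  interpret prob_space M by (rule P)
  have paths: "\<forall>j<m. \<forall>\<omega>\<in>space M.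
        Y j \<omega> 0 = 0 \<and> (\<forall>t\<ge>0. Y j \<omega> t \<in> \<nat>) \<and> mono_on {0..} (Y j \<omega>) \<and>
        (\<forall>t\<ge>0. continuous (at_right t) (Y j \<omega>))"
    and Ymeas: "\<forall>j<m. \<forall>t\<ge>0. (\<lambda>\<omega>. Y j \<omega> t) \<in> borel_measurable M"
    and Ydist: "\<forall>j<m. \<forall>s t. 0 \<le> s \<longrightarrow> s \<le> t \<longrightarrow> (\<forall>k::nat.
        measure M {\<omega>\<in>space M. Y j \<omega> t - Y j \<omega> s = real k}
          = exp (-(t - s)) * (t - s) ^ k / fact k)"
    using Y_poisson unfolding indep_unit_poisson_def by blast+
  obtain \<Gamma> where \<Gamma>: "\<forall>N\<ge>1. real N *\<^sub>R x0 \<in> Zplus \<longrightarrow>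
       (AE \<omega> in M. \<forall>s\<ge>0. norm ((1 / real N) *\<^sub>R XN N \<omega> s) \<le> \<Gamma>)"
    using XN_bdd by blast
  define S where "S = {N. N \<ge> 1 \<and> real N *\<^sub>R x0 \<in> Zplus}"
  have cS: "countable S" by (rule countableI_type)
  have AE1: "AE \<omega> in M. \<forall>N\<in>S. \<forall>s\<ge>0.
       XN N \<omega> s \<in> Zplus \<and>
       (\<forall>j<m. (\<lambda>u. c j * b j N (XN N \<omega> u)) integrable_on {0..s}) \<and>
       XN N \<omega> s = real N *\<^sub>R x0 +
         (\<Sum>j<m. Y j \<omega> (integral {0..s} (\<lambda>u. c j * b j N (XN N \<omega> u))) *\<^sub>R \<nu> j)"
    using XN_eq cS unfolding S_def by (subst AE_ball_countable) auto
  have AE2: "AE \<omega> in M. \<forall>N\<in>S. \<forall>s\<ge>0. norm ((1 / real N) *\<^sub>R XN N \<omega> s) \<le> \<Gamma>"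
    using \<Gamma> cS unfolding S_def by (subst AE_ball_countable) auto
  have AE3: "AE \<omega> in M. \<forall>j. j < m \<longrightarrow> (\<lambda>n. Y j \<omega> (real n) / real n) \<longlonglongrightarrow> 1"
    unfolding AE_all_countable
  proof
    fix j
    show "AE \<omega> in M. j < m \<longrightarrow> (\<lambda>n. Y j \<omega> (real n) / real n) \<longlonglongrightarrow> 1"
    proof (cases "j < m")
      case False then show ?thesis by simp
    next
      case j: True
      have "AE \<omega> in M. (\<lambda>n. Y j \<omega> (real n) / real n) \<longlonglongrightarrow> 1"
      proof (rule pois_slln[OF P, where Z = "\<lambda>n \<omega>. Y j \<omega> (real n)"])
        show "\<forall>n. \<forall>\<omega>\<in>space M. Y j \<omega> (real n) \<in> \<nat>" using paths j by simp
        show "\<forall>n. (\<lambda>\<omega>. Y j \<omega> (real n)) \<in> borel_measurable M" using Ymeas j by simp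
        show "\<forall>n. \<forall>k::nat. measure M {\<omega>\<in>space M. Y j \<omega> (real n) = real k} = exp (- real n) * real n ^ k / fact k"
        proof (intro allI)
          fix n k :: nat
          have "{\<omega>\<in>space M. Y j \<omega> (real n) = real k} = {\<omega>\<in>space M. Y j \<omega> (real n) - Y j \<omega> 0 = real k}"
            using paths j by auto
          moreover have "measure M {\<omega>\<in>space M. Y j \<omega> (real n) - Y j \<omega> 0 = real k} = exp (-(real n - 0)) * (real n - 0) ^ k / fact k"
            using Ydist j by simp
          ultimately show "measure M {\<omega>\<in>space M. Y j \<omega> (real n) = real k} = exp (- real n) * real n ^ k / fact k"
            by simp
        qed
      qed
      then show ?thesis by simp
    qed
  qed
  have K: "compact (Rplus \<inter> cball (0::real^'n) \<Gamma>)" "Rplus \<inter> cball (0::real^'n) \<Gamma> \<subseteq> Rplus"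
  proof -
    have "closed (Rplus :: (real^'n) set)" unfolding Rplus_def by (rule closed_positive_orthant)
    then show "compact (Rplus \<inter> cball (0::real^'n) \<Gamma>)" by (intro closed_Int_compact) auto
  qed auto
  obtain Lf where Lf: "\<forall>x\<in>Rplus \<inter> cball 0 \<Gamma>. \<forall>N\<ge>1.
       \<bar>fN N (real N *\<^sub>R x) / real N powr \<alpha> - f x\<bar> \<le> Lf / sqrt (real N)"
    using f_rate K by blast
  show ?thesis
    unfolding S_def[symmetric]
    using AE1 AE2 AE3 AE_space
  proof eventually_elim
    case (elim \<omega>)
    have conv: "((\<lambda>N. (1 / real N) *\<^sub>R XN N \<omega> t) \<longlongrightarrow> X t) (inf sequentially (principal S))"
    proof (rule conv[where c = c and b = b and a = a and y = "\<lambda>j. Y j \<omega>" and \<Gamma> = \<Gamma> and XN = "\<lambda>N. XN N \<omega>"])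
      show "t > 0" by fact
      show "\<forall>j<m. c j > 0" by fact
      show "\<forall>j<m. \<forall>N\<ge>1. \<forall>x\<in>Zplus. b j N x \<ge> 0" by fact
      show "\<forall>K. compact K \<and> K \<subseteq> Rplus \<longrightarrow> (\<exists>B>0. \<forall>x\<in>K. \<forall>N\<ge>1. \<forall>j<m.
       \<bar>c j * b j N (real N *\<^sub>R x) / real N - a j x\<bar> \<le> B / real N)" by fact
      show "\<forall>j<m. \<exists>D :: real ^ 'n \<Rightarrow> ((real ^ 'n) \<Rightarrow>\<^sub>L real).
       (\<forall>x. (a j has_derivative blinfun_apply (D x)) (at x)) \<and> continuous_on UNIV D" by fact
      show "\<forall>N\<in>S. N \<ge> 1" by (simp add: S_def)
      show "\<forall>N\<in>S. \<forall>s\<ge>0. XN N \<omega> s \<in> Zplus \<and>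
       (\<forall>j<m. (\<lambda>u. c j * b j N (XN N \<omega> u)) integrable_on {0..s}) \<and>
       XN N \<omega> s = real N *\<^sub>R x0 +
         (\<Sum>j<m. Y j \<omega> (integral {0..s} (\<lambda>u. c j * b j N (XN N \<omega> u))) *\<^sub>R \<nu> j)" using elim by blast
      show "\<forall>N\<in>S. \<forall>s\<ge>0. norm ((1 / real N) *\<^sub>R XN N \<omega> s) \<le> \<Gamma>" using elim by blast
      show "\<forall>j<m. mono_on {0..} (Y j \<omega>)" using paths elim by blast
      show "\<forall>j<m. (\<lambda>n. Y j \<omega> (real n) / real n) \<longlonglongrightarrow> 1" using elim by blast
      show "continuous_on {0..} X" by fact
      show "\<forall>s\<ge>0. X s = x0 + (\<Sum>j<m. integral {0..s} (\<lambda>u. a j (X u)) *\<^sub>R \<nu> j)" by fact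
    qed
    define F where "F = inf sequentially (principal S)"
    define Zt where "Zt N = (1 / real N) *\<^sub>R XN N \<omega> t" for N
    have fZ: "((\<lambda>N. f (Zt N)) \<longlongrightarrow> f (X t)) F"
      unfolding Zt_def F_def by (rule isCont_tendsto_compose[OF f_cont conv])
    have h1: "((\<lambda>N. \<bar>f (Zt N) - f (X t)\<bar>) \<longlongrightarrow> 0) F"
      by (rule tendsto_rabs_zero) (rule LIM_zero[OF fZ])
    have h2: "((\<lambda>N. Lf / sqrt (real N)) \<longlongrightarrow> 0) F"
    proof -
      have "((\<lambda>N. Lf / sqrt (real N)) \<longlongrightarrow> 0) sequentially"
      proof (rule tendsto_divide_0[OF tendsto_const])
        have "filterlim (\<lambda>N. sqrt (real N)) at_top sequentially"
          by (rule filterlim_compose[OF sqrt_at_top filterlim_real_sequentially])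
        then show "filterlim (\<lambda>N. sqrt (real N)) at_infinity sequentially"
          by (rule filterlim_at_top_imp_at_infinity)
      qed
      then show ?thesis unfolding F_def by (rule tendsto_mono[rotated]) simp
    qed
    have bound: "eventually (\<lambda>N. \<bar>fN N (real N *\<^sub>R Zt N) / real N powr \<alpha> - f (X t)\<bar>
        \<le> Lf / sqrt (real N) + \<bar>f (Zt N) - f (X t)\<bar>) F"
      unfolding F_def eventually_inf_principal
    proof (rule always_eventually, intro allI impI)
      fix N assume NS: "N \<in> S"
      have N1: "N \<ge> 1" using NS by (simp add: S_def)
      have "XN N \<omega> t \<in> Zplus" using elim(1) NS t_pos less_imp_le by blast
      then have "Zt N \<in> Rplus" unfolding Zt_def using N1 by (rule Zplus_scale_Rplus)
      moreover have "norm ((1 / real N) *\<^sub>R XN N \<omega> t) \<le> \<Gamma>" using elim(2) NS t_pos less_imp_le by blast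
      then have "norm (Zt N) \<le> \<Gamma>" by (simp only: Zt_def)
      ultimately have "Zt N \<in> Rplus \<inter> cball 0 \<Gamma>" by simp
      then have "\<bar>fN N (real N *\<^sub>R Zt N) / real N powr \<alpha> - f (Zt N)\<bar> \<le> Lf / sqrt (real N)"
        using Lf N1 by blast
      then show "\<bar>fN N (real N *\<^sub>R Zt N) / real N powr \<alpha> - f (X t)\<bar>
        \<le> Lf / sqrt (real N) + \<bar>f (Zt N) - f (X t)\<bar>" by linarith
    qed
    have "((\<lambda>N. \<bar>fN N (real N *\<^sub>R Zt N) / real N powr \<alpha> - f (X t)\<bar>) \<longlongrightarrow> 0) F"
    proof (rule tendsto_sandwich[where f = "\<lambda>_. 0"])
      show "eventually (\<lambda>N. 0 \<le> \<bar>fN N (real N *\<^sub>R Zt N) / real N powr \<alpha> - f (X t)\<bar>) F" by simp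
      show "eventually (\<lambda>N. \<bar>fN N (real N *\<^sub>R Zt N) / real N powr \<alpha> - f (X t)\<bar>
        \<le> Lf / sqrt (real N) + \<bar>f (Zt N) - f (X t)\<bar>) F" by (rule bound)
      show "((\<lambda>_. 0::real) \<longlongrightarrow> 0) F" by simp
      show "((\<lambda>N. Lf / sqrt (real N) + \<bar>f (Zt N) - f (X t)\<bar>) \<longlongrightarrow> 0) F"
        using tendsto_add[OF h2 h1] by simp
    qed
    then show ?case by (simp add: Zt_def F_def)
  qed
qed

end
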